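(* Let $p<1$. For any $t\in[0,T]$ and $n\in\mathbb N$, with $\mathcal O^n_t=\{x\in\mathbb{R}^d:x^Tz\ge-1+\frac1n\ \forall z\in\mathbf S_t\}$, the map $(y,M,\mu)\mapsto\sup_{x\in\mathcal O^n_t}g^{(y,M,\mu)}(x)$ is continuous on $\Theta_t$ with respect to the metric $d_{\mathcal C}$.
   Context: Fix $T>0$, $d\ge1$, $\varepsilon\in(0,2]$. Let $\mathbb{S}^d_+$ be the symmetric positive definite $d\times d$ matrices, $\mathcal L$ the Lévy measures on $\mathbb{R}^d$, with $d^\varepsilon_{\mathcal L}(\mu,\nu)=\sup\int f\,d(\tilde\mu-\tilde\nu)$, $\tilde\mu(A)=\int_A(|z|^{2-\varepsilon}\wedge1)\mu(dz)$, sup over bounded continuous $f$ with $\sup_{z\neq\hat z}[|f(z)|\vee|f(z)-f(\hat z)|/|z-\hat z|^{\varepsilon\wedge1}]\le1$. $\mathcal C\subset\mathbb{R}^d\times\mathbb{S}^d_+\times\mathcal L$ is compact for $d_{\mathcal C}((y,M,\mu),(\hat y,\hat M,\hat\mu))=|y-\hat y|\vee\|M-\hat M\|_2\vee d^\varepsilon_{\mathcal L}(\mu,\hat\mu)$; $\Theta:[0,T]\twoheadrightarrow\mathcal C$ is a weakly measurable correspondence with closed convex values. Assume $\mathbf S_t=\bigcup_{(y,M,\mu)\in\Theta_t}\mathrm{supp}(\mu)$ is closed, there is $\kappa_t>0$ with $\{|z|\le\kappa_t^{-1}\}\subseteq\mathrm{Conv}(\mathbf S_t\cup\{0\})\subseteq\{|z|\le\kappa_t\}$,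 and $|y|\vee\|M\|_2\vee d^\varepsilon_{\mathcal L}(\mu,0)\le\kappa_t$ on $\Theta_t$. Let $U(x)=\log x$ if $p=0$, $x^p/p$ otherwise, and for $x$ with $x^Tz>-1$ for all $z\in\mathbf S_t$ and $(y,M,\mu)\in\Theta_t$ let $g^{(y,M,\mu)}(x)=x^Ty-\frac{1-p}2x^TMx+\int(U(1+x^Tz)-U(1)-x^Tz)\mu(dz)$. *)

theory Defs
  imports "HOL-Analysis.Analysis"
begin

type_synonym 'd triple = "(real^'d) \<times> (real^'d^'d) \<times> (real^'d) measure"

definition spd :: "real^('d::finite)^'d \<Rightarrow> bool" where
  "spd M \<longleftrightarrow> transpose M = M \<and> (\<forall>x. x \<noteq> 0 \<longrightarrow> x \<bullet> (M *v x) > 0)"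

definition mnorm2 :: "real^('d::finite)^'d \<Rightarrow> real" where
  "mnorm2 M = onorm (\<lambda>x. M *v x)"

definition levy :: "(real^('d::finite)) measure \<Rightarrow> bool" where
  "levy \<mu> \<longleftrightarrow> sets \<mu> = sets borel \<and> emeasure \<mu> {0} = 0 \<and>
     (\<integral>\<^sup>+ z. ennreal (min ((norm z)\<^sup>2) 1) \<partial>\<mu>) < \<infinity>"

text \<open>Weight |z|^(2-eps) min 1 defining the finite measure mu-tilde.\<close>
definition wt :: "real \<Rightarrow> real^('d::finite) \<Rightarrow> real" where
  "wt eps z = min (norm z powr (2 - eps)) 1"

definition testf :: "real \<Rightarrow> (real^('d::finite) \<Rightarrow> real) set" where
  "testf eps = {f. continuous_on UNIV f \<and> bounded (range f) \<and>
     (\<forall>z zh. z \<noteq> zh \<longrightarrow> \<bar>f z\<bar> \<le> 1 \<and> \<bar>f z - f zh\<bar> \<le> norm (z - zh) powr (min eps 1))}"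

text \<open>The (extended) metric d^eps_L; it is infinite when one of the tilde-measures
  is not finite (then the supremum is infinite anyway, taking f = 1).\<close>
definition dL :: "real \<Rightarrow> (real^('d::finite)) measure \<Rightarrow> (real^'d) measure \<Rightarrow> ereal" where
  "dL eps \<mu> \<nu> =
     (if \<mu> = \<nu> then 0
      else if integrable \<mu> (wt eps) \<and> integrable \<nu> (wt eps)
      then (SUP f \<in> testf eps. ereal ((\<integral>z. f z * wt eps z \<partial>\<mu>) - (\<integral>z. f z * wt eps z \<partial>\<nu>)))
      else \<infinity>)"

definition dC :: "real \<Rightarrow> ('d::finite) triple \<Rightarrow> ('d::finite) triple \<Rightarrow> ereal" where
  "dC eps a b = (case a of (y, M, \<mu>) \<Rightarrow> case b of (yh, Mh, \<mu>h) \<Rightarrow>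
     max (max (ereal (norm (y - yh))) (ereal (mnorm2 (M - Mh)))) (dL eps \<mu> \<mu>h))"

definition dC_compact :: "real \<Rightarrow> ('d::finite) triple set \<Rightarrow> bool" where
  "dC_compact eps C \<longleftrightarrow> (\<forall>s::nat \<Rightarrow> _. range s \<subseteq> C \<longrightarrow>
     (\<exists>l\<in>C. \<exists>r. strict_mono r \<and> ((\<lambda>k::nat. dC eps (s (r k)) l) \<longlongrightarrow> 0) sequentially))"

definition dC_closed_in :: "real \<Rightarrow> ('d::finite) triple set \<Rightarrow> ('d::finite) triple set \<Rightarrow> bool" where
  "dC_closed_in eps C A \<longleftrightarrow> A \<subseteq> C \<and> (\<forall>(s::nat \<Rightarrow> _) l. range s \<subseteq> A \<longrightarrow> l \<in> C \<longrightarrow>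
     ((\<lambda>k::nat. dC eps (s k) l) \<longlongrightarrow> 0) sequentially \<longrightarrow> l \<in> A)"

definition dC_open_in :: "real \<Rightarrow> ('d::finite) triple set \<Rightarrow> ('d::finite) triple set \<Rightarrow> bool" where
  "dC_open_in eps C U \<longleftrightarrow> U \<subseteq> C \<and>
     (\<forall>a\<in>U. \<exists>r>0. \<forall>b\<in>C. dC eps a b < ereal r \<longrightarrow> b \<in> U)"

definition mix_measure :: "real \<Rightarrow> (real^('d::finite)) measure \<Rightarrow> (real^'d) measure \<Rightarrow> (real^'d) measure" where
  "mix_measure l \<mu> \<nu> = measure_of UNIV (sets borel)
     (\<lambda>A. ennreal l * emeasure \<mu> A + ennreal (1 - l) * emeasure \<nu> A)"

definition triple_convex :: "('d::finite) triple set \<Rightarrow> bool" where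
  "triple_convex A \<longleftrightarrow> (\<forall>a\<in>A. \<forall>b\<in>A. \<forall>l\<in>{0..1::real}.
     (case a of (y, M, \<mu>) \<Rightarrow> case b of (yh, Mh, \<mu>h) \<Rightarrow>
       (l *\<^sub>R y + (1 - l) *\<^sub>R yh, l *\<^sub>R M + (1 - l) *\<^sub>R Mh, mix_measure l \<mu> \<mu>h)) \<in> A)"

definition weakly_measurable :: "real \<Rightarrow> real \<Rightarrow> ('d::finite) triple set \<Rightarrow> (real \<Rightarrow> ('d::finite) triple set) \<Rightarrow> bool" where
  "weakly_measurable eps T C \<Theta> \<longleftrightarrow>
     (\<forall>U. dC_open_in eps C U \<longrightarrow> {t \<in> {0..T}. \<Theta> t \<inter> U \<noteq> {}} \<in> sets borel)"

definition msupp :: "(real^('d::finite)) measure \<Rightarrow> (real^'d) set" where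
  "msupp \<mu> = {z. \<forall>e>0. emeasure \<mu> (ball z e) > 0}"

definition bigS :: "(real \<Rightarrow> ('d::finite) triple set) \<Rightarrow> real \<Rightarrow> (real^'d) set" where
  "bigS \<Theta> t = (\<Union>(y, M, \<mu>) \<in> \<Theta> t. msupp \<mu>)"

definition util :: "real \<Rightarrow> real \<Rightarrow> real" where
  "util p x = (if p = 0 then ln x else x powr p / p)"

definition gfun :: "real \<Rightarrow> ('d::finite) triple \<Rightarrow> real^'d \<Rightarrow> real" where
  "gfun p a x = (case a of (y, M, \<mu>) \<Rightarrow>
     x \<bullet> y - (1 - p) / 2 * (x \<bullet> (M *v x))
     + (\<integral>z. util p (1 + x \<bullet> z) - util p 1 - x \<bullet> z \<partial>\<mu>))"

definition Oset :: "(real \<Rightarrow> ('d::finite) triple set) \<Rightarrow> real \<Rightarrow> nat \<Rightarrow> (real^'d) set" where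
  "Oset \<Theta> t n = {x. \<forall>z \<in> bigS \<Theta> t. x \<bullet> z \<ge> -1 + 1 / real n}"

end

theory Submission
  imports Defs
begin
lemma lip_interval:
  fixes f f' :: "real \<Rightarrow> real"
  assumes der: "\<And>u. a \<le> u \<Longrightarrow> u \<le> b \<Longrightarrow> (f has_real_derivative f' u) (at u)"
    and bd: "\<And>u. a \<le> u \<Longrightarrow> u \<le> b \<Longrightarrow> \<bar>f' u\<bar> \<le> L"
    and s: "a \<le> s" "s \<le> b" and r: "a \<le> r" "r \<le> b"
  shows "\<bar>f s - f r\<bar> \<le> L * \<bar>s - r\<bar>"
proof -
  have main: "\<bar>f v - f u\<bar> \<le> L * \<bar>v - u\<bar>" if h: "a \<le> u" "u < v" "v \<le> b" for u v
  proof -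
    obtain z where z: "u < z" "z < v" "f v - f u = (v - u) * f' z"
    proof -
      have "\<And>x. u \<le> x \<Longrightarrow> x \<le> v \<Longrightarrow> (f has_real_derivative f' x) (at x)"
        using der h by auto
      then show ?thesis using MVT2[of u v f f'] h that by blast
    qed
    have "\<bar>f v - f u\<bar> = \<bar>v - u\<bar> * \<bar>f' z\<bar>" using z by (simp add: abs_mult)
    also have "\<dots> \<le> \<bar>v - u\<bar> * L" using bd[of z] z h by (intro mult_left_mono) auto
    finally show ?thesis by (simp add: mult.commute)
  qed
  show ?thesis
  proof (cases s r rule: linorder_cases)
    case less then show ?thesis using main[of s r] s r by (simp add: abs_minus_commute)
  next
    case equal then show ?thesis by simp
  next
    case greater then show ?thesis using main[of r s] s r by simp
  qed
qed

definition kf :: "real \<Rightarrow> real \<Rightarrow> real" where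
  "kf p s = util p (1 + s) - util p 1 - s"

lemma util_deriv: "0 < u \<Longrightarrow> (util p has_real_derivative u powr (p - 1)) (at u)"
proof -
  assume u: "0 < u"
  show ?thesis
  proof (cases "p = 0")
    case True
    have "(util p has_real_derivative inverse u) (at u)"
      unfolding util_def using True DERIV_ln[OF u] by simp
    moreover have "inverse u = u powr (p - 1)" using True u by (simp add: powr_minus)
    ultimately show ?thesis by simp
  next
    case False
    have "((\<lambda>u. u powr p / p) has_real_derivative (p * u powr (p - 1)) / p) (at u)"
      by (intro DERIV_cdivide has_real_derivative_powr u)
    then show ?thesis unfolding util_def using False by simp
  qed
qed

lemma kf_deriv: "-1 < s \<Longrightarrow> (kf p has_real_derivative ((1 + s) powr (p - 1) - 1)) (at s)"
proof -
  assume s: "-1 < s"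
  have "((\<lambda>s. util p (1 + s)) has_real_derivative (1 + s) powr (p - 1) * 1) (at s)"
    by (rule DERIV_chain2[OF util_deriv]) (use s in \<open>auto intro!: derivative_eq_intros\<close>)
  then have "((\<lambda>s. util p (1 + s) - util p 1 - s) has_real_derivative ((1 + s) powr (p - 1) * 1 - 0 - 1)) (at s)"
    by (intro derivative_intros) auto
  then show ?thesis unfolding kf_def[abs_def] by simp
qed

lemma kf0: "kf p 0 = 0" by (simp add: kf_def)

lemma kf_deriv_bound:
  fixes p m s :: real
  assumes p: "p < 1" and m: "0 < m" "m \<le> 1" and s: "-1 + m \<le> s"
  shows "\<bar>(1 + s) powr (p - 1) - 1\<bar> \<le> (1 - p) * m powr (p - 2) * \<bar>s\<bar>"
proof -
  have d: "\<And>u. m \<le> u \<Longrightarrow> ((\<lambda>u. u powr (p - 1)) has_real_derivative (p - 1) * u powr (p - 1 - 1)) (at u)"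
    using m by (intro has_real_derivative_powr) auto
  have b: "\<bar>(p - 1) * u powr (p - 1 - 1)\<bar> \<le> (1 - p) * m powr (p - 2)" if "m \<le> u" for u
  proof -
    have "u powr (p - 2) \<le> m powr (p - 2)" using that m p by (intro powr_mono2') auto
    then show ?thesis using p by (simp add: abs_mult mult_left_mono)
  qed
  have "\<bar>(1 + s) powr (p - 1) - 1 powr (p - 1)\<bar> \<le> (1 - p) * m powr (p - 2) * \<bar>(1 + s) - 1\<bar>"
    by (rule lip_interval[where a = m and b = "max (1 + s) 1", OF d b]) (use m s in auto)
  then show ?thesis by simp
qed

lemma kf_lip:
  fixes p m s r :: real
  assumes p: "p < 1" and m: "0 < m" "m \<le> 1" and s: "-1 + m \<le> s" and r: "-1 + m \<le> r"
  shows "\<bar>kf p s - kf p r\<bar> \<le> ((1 - p) * m powr (p - 2) * max \<bar>s\<bar> \<bar>r\<bar>) * \<bar>s - r\<bar>"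
proof (rule lip_interval[where a = "min s r" and b = "max s r"])
  fix u assume u: "min s r \<le> u" "u \<le> max s r"
  show "(kf p has_real_derivative ((1 + u) powr (p - 1) - 1)) (at u)"
    using u s r m by (intro kf_deriv) auto
  have "\<bar>(1 + u) powr (p - 1) - 1\<bar> \<le> (1 - p) * m powr (p - 2) * \<bar>u\<bar>"
    using u s r m p by (intro kf_deriv_bound) auto
  also have "\<dots> \<le> (1 - p) * m powr (p - 2) * max \<bar>s\<bar> \<bar>r\<bar>"
    using u p by (intro mult_left_mono) auto
  finally show "\<bar>(1 + u) powr (p - 1) - 1\<bar> \<le> (1 - p) * m powr (p - 2) * max \<bar>s\<bar> \<bar>r\<bar>" .
qed auto

lemma kf_bound:
  fixes p m s :: real
  assumes p: "p < 1" and m: "0 < m" "m \<le> 1" and s: "-1 + m \<le> s"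
  shows "\<bar>kf p s\<bar> \<le> (1 - p) * m powr (p - 2) * s\<^sup>2"
  using kf_lip[OF p m s, of 0] m by (simp add: kf0 power2_eq_square abs_mult mult.assoc)

lemma AE_msupp:
  fixes \<mu> :: "(real^'d::finite) measure"
  assumes sb: "sets \<mu> = sets borel"
  shows "AE z in \<mu>. z \<in> msupp \<mu>"
proof -
  define F where "F = {ball z e | z e. e > 0 \<and> emeasure \<mu> (ball z e) = 0}"
  have "\<And>S. S \<in> F \<Longrightarrow> open S" unfolding F_def by auto
  then obtain F' where F': "F' \<subseteq> F" "countable F'" "\<Union>F' = \<Union>F" by (rule Lindelof)
  have sub: "- msupp \<mu> \<subseteq> \<Union>F"
  proof
    fix z assume "z \<in> - msupp \<mu>"
    then obtain e where e: "e > 0" "\<not> emeasure \<mu> (ball z e) > 0" unfolding msupp_def by auto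
    then have "emeasure \<mu> (ball z e) = 0" by (simp add: not_gr_zero)
    then have "ball z e \<in> F" unfolding F_def using e by auto
    then show "z \<in> \<Union>F" using e(1) by (intro UnionI[of "ball z e"]) auto
  qed
  have "(\<Union>N\<in>F'. N) \<in> null_sets \<mu>"
  proof (rule null_sets_UN'[OF F'(2)])
    fix N assume "N \<in> F'"
    then obtain z e where "N = ball z e" "emeasure \<mu> (ball z e) = 0" using F'(1) unfolding F_def by auto
    then show "N \<in> null_sets \<mu>" using sb by (auto simp: null_sets_def)
  qed
  then show ?thesis
    by (rule AE_I') (use sub F'(3) in auto)
qed

lemma Sup_diff:
  fixes f g :: "'a \<Rightarrow> real"
  assumes X: "X \<noteq> {}" and bf: "bdd_above (f ` X)" and bg: "bdd_above (g ` X)"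
    and d: "\<And>x. x \<in> X \<Longrightarrow> \<bar>f x - g x\<bar> \<le> \<beta>"
  shows "\<bar>Sup (f ` X) - Sup (g ` X)\<bar> \<le> \<beta>"
proof -
  have 1: "Sup (f ` X) \<le> Sup (g ` X) + \<beta>"
  proof (rule cSUP_least[OF X])
    fix x assume x: "x \<in> X"
    have "g x \<le> Sup (g ` X)" using bg x by (rule cSUP_upper2) simp
    then show "f x \<le> Sup (g ` X) + \<beta>" using d[OF x] by linarith
  qed
  have 2: "Sup (g ` X) \<le> Sup (f ` X) + \<beta>"
  proof (rule cSUP_least[OF X])
    fix x assume x: "x \<in> X"
    have "f x \<le> Sup (f ` X)" using bf x by (rule cSUP_upper2) simp
    then show "g x \<le> Sup (f ` X) + \<beta>" using d[OF x] by linarith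
  qed
  show ?thesis using 1 2 by linarith
qed

lemma lip_div:
  fixes N D :: "'a::real_normed_vector \<Rightarrow> real"
  assumes LN: "\<And>z w. \<bar>N z - N w\<bar> \<le> Lnn * norm (z - w)"
    and BN: "\<And>z. \<bar>N z\<bar> \<le> Bn"
    and LD: "\<And>z w. \<bar>D z - D w\<bar> \<le> Ld * norm (z - w)"
    and d0: "d0 > 0" and Dlow: "\<And>z. D z \<ge> d0"
  shows "\<bar>N z / D z - N w / D w\<bar> \<le> (Lnn / d0 + Bn * Ld / d0\<^sup>2) * norm (z - w)"
proof -
  have Dz: "D z > 0" "D w > 0" using Dlow[of z] Dlow[of w] d0 by auto
  have eq: "N z / D z - N w / D w = (N z - N w) / D z + N w * (D w - D z) / (D z * D w)"
    using Dz by (simp add: field_simps)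
  have Bn0: "Bn \<ge> 0" using BN[of z] by simp
  have Ln0: "Lnn * norm (z - w) \<ge> 0" using LN[of z w] by linarith
  have Ld0: "Ld * norm (z - w) \<ge> 0" using LD[of z w] by linarith
  have a: "\<bar>(N z - N w) / D z\<bar> \<le> Lnn * norm (z - w) / d0"
  proof -
    have "\<bar>(N z - N w) / D z\<bar> = \<bar>N z - N w\<bar> / D z" by (rule abs_div_pos[OF Dz(1), symmetric])
    also have "\<dots> \<le> Lnn * norm (z - w) / D z" using LN[of z w] Dz by (intro divide_right_mono) auto
    also have "\<dots> \<le> Lnn * norm (z - w) / d0" using Ln0 Dlow[of z] d0 by (intro divide_left_mono) auto
    finally show ?thesis .
  qed
  have b: "\<bar>N w * (D w - D z) / (D z * D w)\<bar> \<le> Bn * (Ld * norm (z - w)) / d0\<^sup>2"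
  proof -
    have "\<bar>N w * (D w - D z) / (D z * D w)\<bar> = \<bar>N w\<bar> * \<bar>D w - D z\<bar> / (D z * D w)"
      unfolding abs_div_pos[OF mult_pos_pos[OF Dz], symmetric] abs_mult ..
    also have "\<dots> \<le> Bn * (Ld * norm (z - w)) / (D z * D w)"
      using BN[of w] LD[of w z] Dz by (intro divide_right_mono mult_mono) (auto simp: norm_minus_commute)
    also have "\<dots> \<le> Bn * (Ld * norm (z - w)) / d0\<^sup>2"
    proof -
      have "d0\<^sup>2 \<le> D z * D w" unfolding power2_eq_square
        using Dlow[of z] Dlow[of w] d0 by (intro mult_mono) auto
      then show ?thesis using mult_nonneg_nonneg[OF Bn0 Ld0] d0 Dz
        by (intro divide_left_mono) auto
    qed
    finally show ?thesis .
  qed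
  have "\<bar>N z / D z - N w / D w\<bar> \<le> Lnn * norm (z - w) / d0 + Bn * (Ld * norm (z - w)) / d0\<^sup>2"
    unfolding eq using a b by linarith
  also have "\<dots> = (Lnn / d0 + Bn * Ld / d0\<^sup>2) * norm (z - w)" by (simp add: field_simps)
  finally show ?thesis .
qed

lemma testf_I:
  fixes \<psi> :: "real^'d::finite \<Rightarrow> real"
  assumes L: "\<And>z w. \<bar>\<psi> z - \<psi> w\<bar> \<le> L * norm (z - w)"
    and B: "\<And>z. \<bar>\<psi> z\<bar> \<le> Bp" and L0: "L \<ge> 0" and B0: "Bp \<ge> 0"
    and eps: "0 < eps"
  shows "(\<lambda>z. \<psi> z / (2 * Bp + L + 1)) \<in> testf eps"
proof -
  define K where "K = 2 * Bp + L + 1"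
  have K: "K > 0" "K \<ge> 1" unfolding K_def using L0 B0 by auto
  have cont: "continuous_on UNIV \<psi>"
  proof (rule continuous_onI)
    fix x and e :: real assume e: "e > 0"
    show "\<exists>d>0. \<forall>x'\<in>UNIV. dist x' x < d \<longrightarrow> dist (\<psi> x') (\<psi> x) \<le> e"
    proof (intro exI[of _ "e / (L + 1)"] conjI ballI impI)
      show "e / (L + 1) > 0" using e L0 by auto
      fix x' assume "dist x' x < e / (L + 1)"
      then have "(L + 1) * dist x' x \<le> e" using L0 by (simp add: field_simps)
      moreover have "dist (\<psi> x') (\<psi> x) \<le> L * dist x' x"
        using L[of x' x] by (simp add: dist_real_def dist_norm)
      moreover have "L * dist x' x \<le> (L + 1) * dist x' x" by (simp add: distrib_right)
      ultimately show "dist (\<psi> x') (\<psi> x) \<le> e" by linarith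
    qed
  qed
  have fB: "\<bar>\<psi> z / K\<bar> \<le> 1 / 2" for z
  proof -
    have "\<bar>\<psi> z / K\<bar> = \<bar>\<psi> z\<bar> / K" using K by simp
    also have "\<dots> \<le> Bp / K" using B[of z] K by (intro divide_right_mono) auto
    also have "\<dots> \<le> 1 / 2" using K L0 B0 unfolding K_def by (simp add: field_simps)
    finally show ?thesis .
  qed
  have hol: "\<bar>\<psi> z / K - \<psi> w / K\<bar> \<le> norm (z - w) powr (min eps 1)" for z w
  proof (cases "norm (z - w) \<ge> 1")
    case True
    have "1 \<le> norm (z - w) powr (min eps 1)" using True eps
      by (intro ge_one_powr_ge_zero) auto
    then show ?thesis using fB[of z] fB[of w] by linarith
  next
    case False
    have "\<bar>\<psi> z / K - \<psi> w / K\<bar> = \<bar>\<psi> z - \<psi> w\<bar> / K" using K by (simp add: diff_divide_distrib[symmetric])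
    also have "\<dots> \<le> L * norm (z - w) / K" using L[of z w] K by (intro divide_right_mono) auto
    also have "\<dots> \<le> norm (z - w)" using K L0 B0 unfolding K_def by (simp add: field_simps mult_right_mono)
    also have "\<dots> \<le> norm (z - w) powr (min eps 1)"
    proof (cases "z = w")
      case True then show ?thesis by simp
    next
      case False
      then have "norm (z - w) > 0" by simp
      then have "norm (z - w) powr 1 \<le> norm (z - w) powr (min eps 1)"
        using \<open>\<not> norm (z - w) \<ge> 1\<close> eps by (intro powr_mono') auto
      then show ?thesis using \<open>norm (z - w) > 0\<close> by simp
    qed
    finally show ?thesis .
  qed
  have "continuous_on UNIV (\<lambda>z. \<psi> z / K)" using cont K by (intro continuous_intros) auto
  moreover have "bounded (range (\<lambda>z. \<psi> z / K))"
    unfolding bounded_iff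
  proof (intro exI[of _ 1] ballI)
    fix u assume "u \<in> range (\<lambda>z. \<psi> z / K)"
    then obtain z where "u = \<psi> z / K" by auto
    then show "norm u \<le> 1" using fB[of z] by (simp only: real_norm_def)
  qed
  moreover have fB1: "\<bar>\<psi> z / K\<bar> \<le> 1" for z using fB[of z] by linarith
  ultimately show ?thesis unfolding testf_def K_def[symmetric] mem_Collect_eq
  proof (intro conjI allI impI)
    fix z zh :: "real^'d"
    show "\<bar>\<psi> z / K\<bar> \<le> 1" by (rule fB1)
    show "\<bar>\<psi> z / K - \<psi> zh / K\<bar> \<le> norm (z - zh) powr (min eps 1)" by (rule hol)
  qed
qed

locale setting =
  fixes p m \<kappa> eps :: real and S :: "(real^'d::finite) set"
  assumes p: "p < 1" and m: "0 < m" "m \<le> 1" and \<kappa>: "\<kappa> > 0"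
    and eps: "0 < eps" "eps \<le> 2"
    and S: "S \<subseteq> cball 0 \<kappa>"
begin

definition "Bk = (1 - p) * m powr (p - 2)"
definition "R = \<kappa>\<^sup>2"
definition "cl s = max (-1 + m) (min s R)"
definition "Nf x z = kf p (cl (x \<bullet> z))"
definition "Df c (z::real^'d) = (max c (min (norm z) 1)) powr (2 - eps)"
definition "LN = Bk * (1 + R) * \<kappa>"
definition "BN = Bk * (1 + R)\<^sup>2"
definition "LD c = 2 * (c powr (1 - eps) + 1)"
definition "d0 c = c powr (2 - eps)"

lemma Bk0: "Bk \<ge> 0" unfolding Bk_def using p by simp
lemma R0: "R \<ge> 0" unfolding R_def by simp

lemma cl_ge: "cl s \<ge> -1 + m" unfolding cl_def by simp
lemma cl_abs: "\<bar>cl s\<bar> \<le> 1 + R" unfolding cl_def using m R0 by auto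
lemma cl_lip: "\<bar>cl s - cl r\<bar> \<le> \<bar>s - r\<bar>" unfolding cl_def by auto

lemma N_lip:
  assumes x: "norm x \<le> \<kappa>"
  shows "\<bar>Nf x z - Nf x w\<bar> \<le> LN * norm (z - w)"
proof -
  have "\<bar>Nf x z - Nf x w\<bar> \<le> (Bk * max \<bar>cl (x \<bullet> z)\<bar> \<bar>cl (x \<bullet> w)\<bar>) * \<bar>cl (x \<bullet> z) - cl (x \<bullet> w)\<bar>"
    unfolding Nf_def Bk_def by (rule kf_lip[OF p m cl_ge cl_ge])
  also have "\<dots> \<le> (Bk * (1 + R)) * \<bar>x \<bullet> z - x \<bullet> w\<bar>"
    using cl_abs[of "x \<bullet> z"] cl_abs[of "x \<bullet> w"] cl_lip[of "x \<bullet> z" "x \<bullet> w"] Bk0 R0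
    by (intro mult_mono mult_left_mono) auto
  also have "\<bar>x \<bullet> z - x \<bullet> w\<bar> \<le> \<kappa> * norm (z - w)"
  proof -
    have "\<bar>x \<bullet> z - x \<bullet> w\<bar> = \<bar>x \<bullet> (z - w)\<bar>" by (simp add: inner_diff_right)
    also have "\<dots> \<le> norm x * norm (z - w)" by (rule Cauchy_Schwarz_ineq2)
    also have "\<dots> \<le> \<kappa> * norm (z - w)" using x by (intro mult_right_mono) auto
    finally show ?thesis .
  qed
  then have "(Bk * (1 + R)) * \<bar>x \<bullet> z - x \<bullet> w\<bar> \<le> (Bk * (1 + R)) * (\<kappa> * norm (z - w))"
    using Bk0 R0 by (intro mult_left_mono) auto
  finally show ?thesis unfolding LN_def by (simp add: mult.assoc)
qed

lemma N_bd: "\<bar>Nf x z\<bar> \<le> BN"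
proof -
  have "\<bar>Nf x z\<bar> \<le> Bk * (cl (x \<bullet> z))\<^sup>2" unfolding Nf_def Bk_def by (rule kf_bound[OF p m cl_ge])
  also have "\<dots> \<le> Bk * (1 + R)\<^sup>2"
  proof -
    have "(cl (x \<bullet> z))\<^sup>2 = \<bar>cl (x \<bullet> z)\<bar>\<^sup>2" by simp
    also have "\<dots> \<le> (1 + R)\<^sup>2" using cl_abs by (intro power_mono) auto
    finally show ?thesis using Bk0 by (intro mult_left_mono) auto
  qed
  finally show ?thesis unfolding BN_def .
qed

lemma D_lip:
  assumes c: "0 < c" "c \<le> 1"
  shows "\<bar>Df c z - Df c w\<bar> \<le> LD c * norm (z - w)"
proof -
  define g where "g = (\<lambda>r::real. r powr (2 - eps))"
  define cz where "cz = max c (min (norm z) 1)"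
  define cw where "cw = max c (min (norm w) 1)"
  have range: "c \<le> cz" "cz \<le> 1" "c \<le> cw" "cw \<le> 1" unfolding cz_def cw_def using c by auto
  have "\<bar>g cz - g cw\<bar> \<le> LD c * \<bar>cz - cw\<bar>"
  proof (rule lip_interval[where a = c and b = 1])
    fix u assume u: "c \<le> u" "u \<le> 1"
    show "(g has_real_derivative (2 - eps) * u powr (2 - eps - 1)) (at u)"
      unfolding g_def using u c by (intro has_real_derivative_powr) auto
    have "u powr (1 - eps) \<le> c powr (1 - eps) + 1"
    proof (cases "1 - eps \<ge> 0")
      case True
      then have "u powr (1 - eps) \<le> 1 powr (1 - eps)" using u c by (intro powr_mono2) auto
      then have "u powr (1 - eps) \<le> 1" by simp
      moreover have "c powr (1 - eps) \<ge> 0" by simp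
      ultimately show ?thesis by linarith
    next
      case False
      then have "u powr (1 - eps) \<le> c powr (1 - eps)" using u c by (intro powr_mono2') auto
      then show ?thesis by linarith
    qed
    moreover have "2 - eps - 1 = 1 - eps" by simp
    ultimately show "\<bar>(2 - eps) * u powr (2 - eps - 1)\<bar> \<le> LD c"
    proof -
      assume a1: "u powr (1 - eps) \<le> c powr (1 - eps) + 1" and a2: "2 - eps - 1 = 1 - eps"
      have "\<bar>(2 - eps) * u powr (2 - eps - 1)\<bar> = (2 - eps) * u powr (1 - eps)"
        using eps a2 by (simp add: abs_mult)
      also have "\<dots> \<le> 2 * u powr (1 - eps)" using eps by (intro mult_right_mono) auto
      also have "\<dots> \<le> 2 * (c powr (1 - eps) + 1)" using a1 by simp
      finally show ?thesis unfolding LD_def .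
    qed
  qed (use range in auto)
  also have "\<bar>cz - cw\<bar> \<le> norm (z - w)"
  proof -
    have "\<bar>cz - cw\<bar> \<le> \<bar>norm z - norm w\<bar>" unfolding cz_def cw_def by auto
    also have "\<dots> \<le> norm (z - w)" by (rule norm_triangle_ineq3)
    finally show ?thesis .
  qed
  then have "LD c * \<bar>cz - cw\<bar> \<le> LD c * norm (z - w)"
    unfolding LD_def using c by (intro mult_left_mono) auto
  finally show ?thesis unfolding Df_def g_def cz_def cw_def .
qed

lemma d0_pos: "0 < c \<Longrightarrow> d0 c > 0" unfolding d0_def by simp

lemma D_low:
  assumes c: "0 < c"
  shows "Df c z \<ge> d0 c"
  unfolding Df_def d0_def using c eps by (intro powr_mono2) auto

end

context setting
begin

definition "psi c x z = Nf x z / Df c z"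
definition "Bpsi c = BN / d0 c"
definition "Lpsi c = LN / d0 c + BN * LD c / (d0 c)\<^sup>2"
definition "Kc c = 2 * Bpsi c + Lpsi c + 1"

lemma BN0: "BN \<ge> 0" unfolding BN_def using Bk0 by simp
lemma LN0: "LN \<ge> 0" unfolding LN_def using Bk0 R0 \<kappa> by simp
lemma LD0: "LD c \<ge> 0" unfolding LD_def by (simp add: add_nonneg_nonneg)

lemma Bpsi0: "0 < c \<Longrightarrow> Bpsi c \<ge> 0" unfolding Bpsi_def using BN0 d0_pos[of c] by simp
lemma Lpsi0: "0 < c \<Longrightarrow> Lpsi c \<ge> 0" unfolding Lpsi_def using BN0 LN0 LD0[of c] d0_pos[of c] by simp
lemma Kc_pos: "0 < c \<Longrightarrow> Kc c > 0" unfolding Kc_def using Bpsi0 Lpsi0 by (simp add: add_nonneg_pos)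

lemma psi_lip:
  assumes x: "norm x \<le> \<kappa>" and c: "0 < c" "c \<le> 1"
  shows "\<bar>psi c x z - psi c x w\<bar> \<le> Lpsi c * norm (z - w)"
  unfolding psi_def Lpsi_def
  using lip_div[where N="Nf x" and D="Df c" and Lnn=LN and Bn=BN and Ld="LD c",
     OF N_lip[OF x] N_bd D_lip[OF c] d0_pos[OF c(1)] D_low[OF c(1)]] .

lemma psi_bd:
  assumes c: "0 < c"
  shows "\<bar>psi c x z\<bar> \<le> Bpsi c"
proof -
  have D: "Df c z \<ge> d0 c" "d0 c > 0" using D_low[OF c] d0_pos[OF c] by auto
  have "\<bar>psi c x z\<bar> = \<bar>Nf x z\<bar> / Df c z" unfolding psi_def using D by (intro abs_div_pos[symmetric]) auto
  also have "\<dots> \<le> BN / Df c z" using N_bd D by (intro divide_right_mono) auto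
  also have "\<dots> \<le> BN / d0 c" using BN0 D by (intro divide_left_mono) auto
  finally show ?thesis unfolding Bpsi_def .
qed

lemma fpsi_testf:
  assumes x: "norm x \<le> \<kappa>" and c: "0 < c" "c \<le> 1"
  shows "(\<lambda>z. psi c x z / Kc c) \<in> testf eps"
  unfolding Kc_def
  using testf_I[where \<psi>="psi c x" and L="Lpsi c" and Bp="Bpsi c",
     OF psi_lip[OF x c] psi_bd[OF c(1)] Lpsi0[OF c(1)] Bpsi0[OF c(1)] eps(1)] .

lemma pointwise:
  assumes x: "norm x \<le> \<kappa>" and xS: "\<forall>z\<in>S. x \<bullet> z \<ge> -1 + m"
    and c: "0 < c" "c \<le> 1" and z: "z \<in> S"
  shows "\<bar>kf p (x \<bullet> z) - psi c x z * wt eps z\<bar> \<le> Bk * \<kappa>\<^sup>2 * c powr eps * wt eps z"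
proof -
  have nz: "norm z \<le> \<kappa>" using S z by auto
  have xz: "\<bar>x \<bullet> z\<bar> \<le> norm x * norm z" by (rule Cauchy_Schwarz_ineq2)
  also have "\<dots> \<le> \<kappa> * \<kappa>" using x nz \<kappa> by (intro mult_mono) auto
  finally have xz: "\<bar>x \<bullet> z\<bar> \<le> R" unfolding R_def by (simp add: power2_eq_square)
  have clx: "cl (x \<bullet> z) = x \<bullet> z" unfolding cl_def using xz xS z by auto
  have N: "Nf x z = kf p (x \<bullet> z)" unfolding Nf_def clx ..
  have wt0: "wt eps z \<ge> 0" unfolding wt_def by simp
  have rhs0: "Bk * \<kappa>\<^sup>2 * c powr eps * wt eps z \<ge> 0" using Bk0 wt0 by simp
  have D: "Df c z \<ge> d0 c" "d0 c > 0" using D_low[OF c(1)] d0_pos[OF c(1)] by auto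
  show ?thesis
  proof (cases "norm z \<ge> c")
    case True
    then have z0: "z \<noteq> 0" using c by auto
    have "Df c z = wt eps z"
    proof (cases "norm z \<le> 1")
      case True
      then have "max c (min (norm z) 1) = norm z" using \<open>norm z \<ge> c\<close> by auto
      moreover have "norm z powr (2 - eps) \<le> 1" using powr_mono2[of "2 - eps" "norm z" 1] True eps by simp
      ultimately show ?thesis unfolding Df_def wt_def by simp
    next
      case False
      then have "max c (min (norm z) 1) = 1" using c by auto
      moreover have "norm z powr (2 - eps) \<ge> 1" using False eps by (intro ge_one_powr_ge_zero) auto
      ultimately show ?thesis unfolding Df_def wt_def by simp
    qed
    then have "psi c x z * wt eps z = kf p (x \<bullet> z)" unfolding psi_def N using D by simp
    then show ?thesis using rhs0 by simp
  next
    case False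
    then have Dc: "Df c z = d0 c" unfolding Df_def d0_def using c by (simp add: max_def min_def)
    have wtz: "wt eps z = norm z powr (2 - eps)"
    proof -
      have "norm z powr (2 - eps) \<le> 1" using powr_mono2[of "2 - eps" "norm z" 1] False c eps by simp
      then show ?thesis unfolding wt_def by simp
    qed
    have wtle: "wt eps z \<le> d0 c" unfolding wtz d0_def using False eps by (intro powr_mono2) auto
    have "kf p (x \<bullet> z) - psi c x z * wt eps z = kf p (x \<bullet> z) * (1 - wt eps z / d0 c)"
      unfolding psi_def N Dc using D by (simp add: field_simps)
    then have "\<bar>kf p (x \<bullet> z) - psi c x z * wt eps z\<bar> = \<bar>kf p (x \<bullet> z)\<bar> * \<bar>1 - wt eps z / d0 c\<bar>"
      by (simp add: abs_mult)
    also have "\<dots> \<le> \<bar>kf p (x \<bullet> z)\<bar> * 1"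
    proof -
      have "0 \<le> wt eps z / d0 c" using wt0 D by simp
      moreover have "wt eps z / d0 c \<le> 1" using wtle D by simp
      ultimately show ?thesis by (intro mult_left_mono) auto
    qed
    also have "\<dots> \<le> Bk * (x \<bullet> z)\<^sup>2" unfolding Bk_def
      using kf_bound[OF p m, of "x \<bullet> z"] xS z by simp
    also have "\<dots> \<le> Bk * (\<kappa>\<^sup>2 * (norm z)\<^sup>2)"
    proof -
      have "(x \<bullet> z)\<^sup>2 = \<bar>x \<bullet> z\<bar>\<^sup>2" by simp
      also have "\<dots> \<le> (norm x * norm z)\<^sup>2" by (intro power_mono Cauchy_Schwarz_ineq2) simp
      also have "\<dots> \<le> (\<kappa> * norm z)\<^sup>2" using x by (intro power_mono mult_right_mono) auto
      finally show ?thesis using Bk0 by (intro mult_left_mono) (auto simp: power_mult_distrib)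
    qed
    also have "(norm z)\<^sup>2 \<le> c powr eps * wt eps z"
    proof (cases "z = 0")
      case True then show ?thesis using wt0 by simp
    next
      case z0: False
      have "(norm z)\<^sup>2 = norm z powr 2" using z0 by (simp add: powr_numeral)
      also have "\<dots> = norm z powr eps * norm z powr (2 - eps)" by (simp add: powr_add[symmetric])
      also have "\<dots> \<le> c powr eps * norm z powr (2 - eps)"
        using False eps by (intro mult_right_mono powr_mono2) auto
      finally show ?thesis unfolding wtz .
    qed
    then have "Bk * (\<kappa>\<^sup>2 * (norm z)\<^sup>2) \<le> Bk * (\<kappa>\<^sup>2 * (c powr eps * wt eps z))"
      using Bk0 by (intro mult_left_mono) auto
    finally show ?thesis by (simp add: mult.assoc)
  qed
qed

end

lemma util_meas[measurable]: "util p \<in> borel_measurable borel"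
  unfolding util_def[abs_def] by (cases "p = 0") simp_all

lemma kf_meas[measurable]: "kf p \<in> borel_measurable borel"
  unfolding kf_def[abs_def] by measurable

lemma wt_meas[measurable]: "wt eps \<in> borel_measurable borel"
  unfolding wt_def[abs_def] by measurable

lemma meas_sets: "sets \<mu> = sets borel \<Longrightarrow> f \<in> borel_measurable borel \<Longrightarrow> f \<in> borel_measurable \<mu>"
  using measurable_cong_sets[of \<mu> borel borel borel] by simp

context setting
begin

lemma psi_meas[measurable]: "psi c x \<in> borel_measurable borel"
  unfolding psi_def[abs_def] Nf_def[abs_def] Df_def[abs_def] cl_def[abs_def] by measurable

lemma measure_decomp:
  fixes \<mu> :: "(real^'d) measure"
  assumes x: "norm x \<le> \<kappa>" and xS: "\<forall>z\<in>S. x \<bullet> z \<ge> -1 + m"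
    and c: "0 < c" "c \<le> 1" and sb: "sets \<mu> = sets borel"
    and AE: "AE z in \<mu>. z \<in> S" and int: "integrable \<mu> (wt eps)"
    and I: "(\<integral>z. wt eps z \<partial>\<mu>) \<le> \<kappa>"
  shows "\<bar>(\<integral>z. kf p (x \<bullet> z) \<partial>\<mu>) - Kc c * (\<integral>z. psi c x z / Kc c * wt eps z \<partial>\<mu>)\<bar>
           \<le> Bk * \<kappa>\<^sup>2 * c powr eps * \<kappa>"
    and "\<bar>\<integral>z. kf p (x \<bullet> z) \<partial>\<mu>\<bar> \<le> (Bpsi c + Bk * \<kappa>\<^sup>2 * c powr eps) * \<kappa>"
proof -
  define C where "C = Bk * \<kappa>\<^sup>2 * c powr eps"
  have C0: "C \<ge> 0" unfolding C_def using Bk0 by simp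
  have wt0: "wt eps z \<ge> 0" for z unfolding wt_def by simp
  have mk: "(\<lambda>z. kf p (x \<bullet> z)) \<in> borel_measurable \<mu>" by (rule meas_sets[OF sb]) measurable
  have mp: "(\<lambda>z. psi c x z * wt eps z) \<in> borel_measurable \<mu>" by (rule meas_sets[OF sb]) measurable
  have ip: "integrable \<mu> (\<lambda>z. psi c x z * wt eps z)"
  proof (rule Bochner_Integration.integrable_bound[OF _ mp])
    show "integrable \<mu> (\<lambda>z. Bpsi c * wt eps z)" using int by simp
    show "AE z in \<mu>. norm (psi c x z * wt eps z) \<le> norm (Bpsi c * wt eps z)"
    proof (rule AE_I2)
      fix z
      have "\<bar>psi c x z\<bar> * wt eps z \<le> Bpsi c * wt eps z"
        using psi_bd[OF c(1)] wt0 by (intro mult_right_mono) auto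
      then show "norm (psi c x z * wt eps z) \<le> norm (Bpsi c * wt eps z)"
        using wt0[of z] Bpsi0[OF c(1)] by (simp add: abs_mult)
    qed
  qed
  have Ebd: "AE z in \<mu>. \<bar>kf p (x \<bullet> z) - psi c x z * wt eps z\<bar> \<le> C * wt eps z"
    using AE by eventually_elim (use pointwise[OF x xS c] in \<open>auto simp: C_def\<close>)
  have iE: "integrable \<mu> (\<lambda>z. kf p (x \<bullet> z) - psi c x z * wt eps z)"
  proof (rule Bochner_Integration.integrable_bound[OF _ _ ])
    show "integrable \<mu> (\<lambda>z. C * wt eps z)" using int by simp
    show "(\<lambda>z. kf p (x \<bullet> z) - psi c x z * wt eps z) \<in> borel_measurable \<mu>" using mk mp by measurable
    show "AE z in \<mu>. norm (kf p (x \<bullet> z) - psi c x z * wt eps z) \<le> norm (C * wt eps z)"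
    proof (use Ebd in eventually_elim)
      case (elim z)
      then show ?case using C0 wt0[of z] by (simp add: abs_mult)
    qed
  qed
  have intE: "\<bar>\<integral>z. kf p (x \<bullet> z) - psi c x z * wt eps z \<partial>\<mu>\<bar> \<le> C * \<kappa>"
  proof -
    have "\<bar>\<integral>z. kf p (x \<bullet> z) - psi c x z * wt eps z \<partial>\<mu>\<bar>
          \<le> (\<integral>z. \<bar>kf p (x \<bullet> z) - psi c x z * wt eps z\<bar> \<partial>\<mu>)"
      using integral_norm_bound[of \<mu> "\<lambda>z. kf p (x \<bullet> z) - psi c x z * wt eps z"] by simp
    also have "\<dots> \<le> (\<integral>z. C * wt eps z \<partial>\<mu>)"
      using iE int Ebd by (intro integral_mono_AE) auto
    also have "\<dots> = C * (\<integral>z. wt eps z \<partial>\<mu>)" by simp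
    also have "\<dots> \<le> C * \<kappa>" using I C0 by (intro mult_left_mono) auto
    finally show ?thesis .
  qed
  have split: "(\<integral>z. kf p (x \<bullet> z) \<partial>\<mu>) = (\<integral>z. psi c x z * wt eps z \<partial>\<mu>)
       + (\<integral>z. kf p (x \<bullet> z) - psi c x z * wt eps z \<partial>\<mu>)"
    using Bochner_Integration.integral_add[OF ip iE] by simp
  have Kc: "Kc c * (\<integral>z. psi c x z / Kc c * wt eps z \<partial>\<mu>) = (\<integral>z. psi c x z * wt eps z \<partial>\<mu>)"
  proof -
    have "(\<integral>z. psi c x z / Kc c * wt eps z \<partial>\<mu>) = (\<integral>z. psi c x z * wt eps z \<partial>\<mu>) / Kc c"
    proof -
      have "(\<lambda>z. psi c x z / Kc c * wt eps z) = (\<lambda>z. psi c x z * wt eps z / Kc c)"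
        by (rule ext) simp
      then show ?thesis by (simp only: integral_divide_zero)
    qed
    then show ?thesis using Kc_pos[OF c(1)] by simp
  qed
  show "\<bar>(\<integral>z. kf p (x \<bullet> z) \<partial>\<mu>) - Kc c * (\<integral>z. psi c x z / Kc c * wt eps z \<partial>\<mu>)\<bar>
           \<le> Bk * \<kappa>\<^sup>2 * c powr eps * \<kappa>"
    using intE unfolding split Kc C_def by simp
  have ipb: "\<bar>\<integral>z. psi c x z * wt eps z \<partial>\<mu>\<bar> \<le> Bpsi c * \<kappa>"
  proof -
    have "\<bar>\<integral>z. psi c x z * wt eps z \<partial>\<mu>\<bar> \<le> (\<integral>z. \<bar>psi c x z * wt eps z\<bar> \<partial>\<mu>)"
      using integral_norm_bound[of \<mu> "\<lambda>z. psi c x z * wt eps z"] by simp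
    also have "\<dots> \<le> (\<integral>z. Bpsi c * wt eps z \<partial>\<mu>)"
    proof (rule integral_mono_AE)
      show "integrable \<mu> (\<lambda>z. \<bar>psi c x z * wt eps z\<bar>)" using ip by simp
      show "integrable \<mu> (\<lambda>z. Bpsi c * wt eps z)" using int by simp
      show "AE z in \<mu>. \<bar>psi c x z * wt eps z\<bar> \<le> Bpsi c * wt eps z"
      proof (rule AE_I2)
        fix z
        have "\<bar>psi c x z\<bar> * wt eps z \<le> Bpsi c * wt eps z"
          using psi_bd[OF c(1)] wt0 by (intro mult_right_mono) auto
        then show "\<bar>psi c x z * wt eps z\<bar> \<le> Bpsi c * wt eps z" using wt0[of z] by (simp add: abs_mult)
      qed
    qed
    also have "\<dots> = Bpsi c * (\<integral>z. wt eps z \<partial>\<mu>)" by simp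
    also have "\<dots> \<le> Bpsi c * \<kappa>" using I Bpsi0[OF c(1)] by (intro mult_left_mono) auto
    finally show ?thesis .
  qed
  show "\<bar>\<integral>z. kf p (x \<bullet> z) \<partial>\<mu>\<bar> \<le> (Bpsi c + Bk * \<kappa>\<^sup>2 * c powr eps) * \<kappa>"
    using ipb intE unfolding split C_def by (simp add: distrib_right)
qed

end

lemma testf_neg:
  assumes "f \<in> testf eps"
  shows "(\<lambda>z. - f z) \<in> testf eps"
proof -
  have c: "continuous_on UNIV f" and b: "bounded (range f)"
    and h: "\<And>z zh. z \<noteq> zh \<Longrightarrow> \<bar>f z\<bar> \<le> 1 \<and> \<bar>f z - f zh\<bar> \<le> norm (z - zh) powr (min eps 1)"
    using assms unfolding testf_def by auto
  have "continuous_on UNIV (\<lambda>z. - f z)" using c by (intro continuous_intros)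
  moreover have "bounded (range (\<lambda>z. - f z))"
  proof -
    have "range (\<lambda>z. - f z) = uminus ` range f" by auto
    then show ?thesis using b by simp
  qed
  moreover have "\<bar>- f z\<bar> \<le> 1 \<and> \<bar>- f z - - f zh\<bar> \<le> norm (z - zh) powr (min eps 1)" if "z \<noteq> zh" for z zh
    using h[OF that] by (simp add: abs_minus_commute)
  ultimately show ?thesis unfolding testf_def by auto
qed

lemma testf_one: "(\<lambda>z. 1) \<in> testf eps"
  unfolding testf_def by auto

lemma dL_diff:
  fixes \<mu> \<nu> :: "(real^'d::finite) measure"
  assumes f: "f \<in> testf eps" and d: "dL eps \<mu> \<nu> < ereal \<delta>"
  shows "\<bar>(\<integral>z. f z * wt eps z \<partial>\<mu>) - (\<integral>z. f z * wt eps z \<partial>\<nu>)\<bar> < \<delta>"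
proof (cases "\<mu> = \<nu>")
  case True
  then show ?thesis using d unfolding dL_def by simp
next
  case False
  show ?thesis
  proof (cases "integrable \<mu> (wt eps) \<and> integrable \<nu> (wt eps)")
    case nI: False
    have "dL eps \<mu> \<nu> = \<infinity>" unfolding dL_def using nI \<open>\<mu> \<noteq> \<nu>\<close> by auto
    then show ?thesis using d by simp
  next
    case True
    have dd: "dL eps \<mu> \<nu> = (SUP f \<in> testf eps. ereal ((\<integral>z. f z * wt eps z \<partial>\<mu>) - (\<integral>z. f z * wt eps z \<partial>\<nu>)))"
      unfolding dL_def using True \<open>\<mu> \<noteq> \<nu>\<close> by simp
    have 1: "ereal ((\<integral>z. f z * wt eps z \<partial>\<mu>) - (\<integral>z. f z * wt eps z \<partial>\<nu>)) \<le> dL eps \<mu> \<nu>"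
      unfolding dd using f by (rule SUP_upper)
    have 2: "ereal ((\<integral>z. - f z * wt eps z \<partial>\<mu>) - (\<integral>z. - f z * wt eps z \<partial>\<nu>)) \<le> dL eps \<mu> \<nu>"
      unfolding dd using testf_neg[OF f] by (rule SUP_upper)
    have a: "(\<integral>z. f z * wt eps z \<partial>\<mu>) - (\<integral>z. f z * wt eps z \<partial>\<nu>) < \<delta>"
      using le_less_trans[OF 1 d] by simp
    have b: "(\<integral>z. - f z * wt eps z \<partial>\<mu>) - (\<integral>z. - f z * wt eps z \<partial>\<nu>) < \<delta>"
      using le_less_trans[OF 2 d] by simp
    have "(\<integral>z. - f z * wt eps z \<partial>\<mu>) = - (\<integral>z. f z * wt eps z \<partial>\<mu>)"
         "(\<integral>z. - f z * wt eps z \<partial>\<nu>) = - (\<integral>z. f z * wt eps z \<partial>\<nu>)"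
      by (simp_all only: mult_minus_left integral_minus)
    then show ?thesis using a b by linarith
  qed
qed

lemma wt_facts:
  fixes \<mu> :: "(real^'d::finite) measure"
  assumes d: "dL eps \<mu> (null_measure borel) \<le> ereal k" and k: "k > 0"
  shows "integrable \<mu> (wt eps)" and "(\<integral>z. wt eps z \<partial>\<mu>) \<le> k"
proof -
  have "integrable \<mu> (wt eps) \<and> (\<integral>z. wt eps z \<partial>\<mu>) \<le> k"
  proof (cases "\<mu> = null_measure borel")
    case True
    then show ?thesis using k by simp
  next
    case False
    show ?thesis
    proof (cases "integrable \<mu> (wt eps) \<and> integrable (null_measure borel) (wt eps)")
      case nI: False
      have "dL eps \<mu> (null_measure borel) = \<infinity>" unfolding dL_def using nI \<open>\<mu> \<noteq> null_measure borel\<close> by auto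
      then show ?thesis using d by simp
    next
      case True
      have dd: "dL eps \<mu> (null_measure borel) = (SUP f \<in> testf eps. ereal ((\<integral>z. f z * wt eps z \<partial>\<mu>) - (\<integral>z. f z * wt eps z \<partial>null_measure borel)))"
        unfolding dL_def using True \<open>\<mu> \<noteq> null_measure borel\<close> by simp
      have "ereal ((\<integral>z. 1 * wt eps z \<partial>\<mu>) - (\<integral>z. 1 * wt eps z \<partial>null_measure borel)) \<le> dL eps \<mu> (null_measure borel)"
        unfolding dd using SUP_upper[OF testf_one, where f = "\<lambda>f. ereal ((\<integral>z. f z * wt eps z \<partial>\<mu>) - (\<integral>z. f z * wt eps z \<partial>null_measure borel))"]
        by simp
      then have "ereal (\<integral>z. wt eps z \<partial>\<mu>) \<le> dL eps \<mu> (null_measure borel)" by simp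
      then have "ereal (\<integral>z. wt eps z \<partial>\<mu>) \<le> ereal k" using d by (rule order_trans)
      then have "(\<integral>z. wt eps z \<partial>\<mu>) \<le> k" by simp
      then show ?thesis using True by simp
    qed
  qed
  then show "integrable \<mu> (wt eps)" and "(\<integral>z. wt eps z \<partial>\<mu>) \<le> k" by auto
qed

lemma mv_bound: "norm (M *v x) \<le> mnorm2 M * norm x"
  unfolding mnorm2_def by (rule onorm[OF matrix_vector_mul_bounded_linear])

lemma mnorm2_nonneg: "mnorm2 M \<ge> 0"
  unfolding mnorm2_def by (rule onorm_pos_le[OF matrix_vector_mul_bounded_linear])

lemma quad_bound: "\<bar>x \<bullet> (M *v x)\<bar> \<le> norm x * (mnorm2 M * norm x)"
proof -
  have "\<bar>x \<bullet> (M *v x)\<bar> \<le> norm x * norm (M *v x)" by (rule Cauchy_Schwarz_ineq2)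
  also have "\<dots> \<le> norm x * (mnorm2 M * norm x)" using mv_bound by (intro mult_left_mono) auto
  finally show ?thesis .
qed

theorem lemmaC2:
  fixes T eps p :: real and n :: nat and t :: real
    and C :: "('d::finite) triple set" and \<Theta> :: "real \<Rightarrow> 'd triple set"
    and \<kappa> :: "real \<Rightarrow> real"
  assumes T_pos: "T > 0"
    and eps: "0 < eps" "eps \<le> 2"
    and C_sub: "\<forall>(y, M, \<mu>) \<in> C. spd M \<and> levy \<mu>"
    and C_compact: "dC_compact eps C"
    and Theta_ne: "\<forall>s\<in>{0..T}. \<Theta> s \<noteq> {}"
    and Theta_closed: "\<forall>s\<in>{0..T}. dC_closed_in eps C (\<Theta> s)"
    and Theta_convex: "\<forall>s\<in>{0..T}. triple_convex (\<Theta> s)"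
    and Theta_meas: "weakly_measurable eps T C \<Theta>"
    and S_closed: "\<forall>s\<in>{0..T}. closed (bigS \<Theta> s)"
    and kappa_pos: "\<forall>s\<in>{0..T}. \<kappa> s > 0"
    and kappa_conv: "\<forall>s\<in>{0..T}. cball 0 (1 / \<kappa> s) \<subseteq> convex hull (bigS \<Theta> s \<union> {0})
                         \<and> convex hull (bigS \<Theta> s \<union> {0}) \<subseteq> cball 0 (\<kappa> s)"
    and kappa_bd: "\<forall>s\<in>{0..T}. \<forall>(y, M, \<mu>) \<in> \<Theta> s.
                      norm y \<le> \<kappa> s \<and> mnorm2 M \<le> \<kappa> s \<and> dL eps \<mu> (null_measure borel) \<le> ereal (\<kappa> s)"
    and p: "p < 1"
    and t: "t \<in> {0..T}"
    and n: "n \<ge> 1"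
  shows "\<forall>a \<in> \<Theta> t. \<forall>e > 0. \<exists>\<delta> > 0. \<forall>b \<in> \<Theta> t.
           dC eps a b < ereal \<delta> \<longrightarrow>
           \<bar>Sup (gfun p b ` Oset \<Theta> t n) - Sup (gfun p a ` Oset \<Theta> t n)\<bar> < e"
proof (intro ballI allI impI)
  fix a e assume a: "a \<in> \<Theta> t" and e: "(e::real) > 0"
  define k where "k = \<kappa> t"
  define S where "S = bigS \<Theta> t"
  define m where "m = 1 / real n"
  define Ox where "Ox = Oset \<Theta> t n"
  have k: "k > 0" using kappa_pos t unfolding k_def by auto
  have m: "0 < m" "m \<le> 1" unfolding m_def using n by auto
  have hull1: "cball 0 (1 / k) \<subseteq> convex hull (S \<union> {0})"
    and hull2: "convex hull (S \<union> {0}) \<subseteq> cball 0 k"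
    using kappa_conv t unfolding k_def S_def by auto
  have Ssub: "S \<subseteq> cball 0 k"
    using hull2 hull_subset[of "S \<union> {0}" convex] by auto
  interpret setting p m k eps S
    by unfold_locales (use p m k eps Ssub in auto)
  have ThC: "\<Theta> t \<subseteq> C" using Theta_closed t unfolding dC_closed_in_def by auto
  have Ofacts: "norm x \<le> k \<and> (\<forall>z\<in>S. x \<bullet> z \<ge> -1 + m)" if x: "x \<in> Ox" for x
  proof -
    have xS: "\<forall>z\<in>S. x \<bullet> z \<ge> -1 + m" using x unfolding Ox_def Oset_def S_def m_def by auto
    have "norm x \<le> k"
    proof (cases "x = 0")
      case True then show ?thesis using k by simp
    next
      case False
      then have nx: "norm x > 0" by simp
      define w where "w = - (1 / (k * norm x)) *\<^sub>R x"
      have "norm w = 1 / k" unfolding w_def using nx k by simp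
      then have "w \<in> convex hull (S \<union> {0})" using hull1 by auto
      moreover have "convex hull (S \<union> {0}) \<subseteq> {v. inner x v \<ge> -1 + m}"
        by (rule hull_minimal) (use xS m in \<open>auto simp: convex_halfspace_ge\<close>)
      ultimately have "x \<bullet> w \<ge> -1 + m" by auto
      moreover have "x \<bullet> w = - norm x / k"
      proof -
        have xx: "x \<bullet> x = norm x * norm x" by (metis power2_eq_square dot_square_norm)
        show ?thesis unfolding w_def using nx k xx by (simp add: field_simps)
      qed
      ultimately have "norm x / k \<le> 1" using m by simp
      then show ?thesis using k by (simp add: field_simps)
    qed
    then show ?thesis using xS by simp
  qed
  have O0: "0 \<in> Ox" unfolding Ox_def Oset_def using n by auto
  have members: "sets \<mu> = sets borel \<and> (AE z in \<mu>. z \<in> S) \<and> integrable \<mu> (wt eps)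
      \<and> (\<integral>z. wt eps z \<partial>\<mu>) \<le> k \<and> norm y \<le> k \<and> mnorm2 M \<le> k"
    if yM: "(y, M, \<mu>) \<in> \<Theta> t" for y M \<mu>
  proof -
    have "levy \<mu>" using C_sub ThC yM by auto
    then have sb: "sets \<mu> = sets borel" unfolding levy_def by simp
    have "msupp \<mu> \<subseteq> S" unfolding S_def bigS_def using yM by auto
    then have AE: "AE z in \<mu>. z \<in> S" using AE_msupp[OF sb] by (auto elim: AE_mp)
    have bd: "norm y \<le> k" "mnorm2 M \<le> k" "dL eps \<mu> (null_measure borel) \<le> ereal k"
      using kappa_bd t yM unfolding k_def by auto
    show ?thesis using sb AE bd wt_facts[OF bd(3) k] by simp
  qed
  have gfun_eq: "gfun p (y, M, \<mu>) x = x \<bullet> y - (1 - p) / 2 * (x \<bullet> (M *v x)) + (\<integral>z. kf p (x \<bullet> z) \<partial>\<mu>)"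
    for y M \<mu> x unfolding gfun_def kf_def by simp
  have bdd: "bdd_above (gfun p b ` Ox)" if b: "b \<in> \<Theta> t" for b
  proof -
    obtain y M \<mu> where bt: "b = (y, M, \<mu>)" by (cases b) auto
    have mem: "sets \<mu> = sets borel" "AE z in \<mu>. z \<in> S" "integrable \<mu> (wt eps)"
       "(\<integral>z. wt eps z \<partial>\<mu>) \<le> k" "norm y \<le> k" "mnorm2 M \<le> k"
      using members[of y M \<mu>] b bt by auto
    define B where "B = k * k + (1 - p) / 2 * (k * (k * k)) + (Bpsi 1 + Bk * k\<^sup>2 * 1 powr eps) * k"
    show ?thesis
    proof (rule bdd_aboveI2)
      fix x assume x: "x \<in> Ox"
      have nx: "norm x \<le> k" and xS: "\<forall>z\<in>S. x \<bullet> z \<ge> -1 + m" using Ofacts[OF x] by auto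
      have i: "\<bar>\<integral>z. kf p (x \<bullet> z) \<partial>\<mu>\<bar> \<le> (Bpsi 1 + Bk * k\<^sup>2 * 1 powr eps) * k"
        by (rule measure_decomp(2)[OF nx xS _ _ mem(1-4)]) auto
      have y: "\<bar>x \<bullet> y\<bar> \<le> k * k"
        using Cauchy_Schwarz_ineq2[of x y] mult_mono[OF nx mem(5)] k by auto
      have q: "\<bar>x \<bullet> (M *v x)\<bar> \<le> k * (k * k)"
      proof -
        have "\<bar>x \<bullet> (M *v x)\<bar> \<le> norm x * (mnorm2 M * norm x)" by (rule quad_bound)
        also have "\<dots> \<le> k * (k * k)"
          using nx mem(6) k mnorm2_nonneg[of M] by (intro mult_mono) auto
        finally show ?thesis .
      qed
      have "- ((1 - p) / 2 * (x \<bullet> (M *v x))) \<le> (1 - p) / 2 * (k * (k * k))"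
      proof -
        have "- ((1 - p) / 2 * (x \<bullet> (M *v x))) \<le> (1 - p) / 2 * \<bar>x \<bullet> (M *v x)\<bar>"
        proof -
          have "(1 - p) / 2 * (- (x \<bullet> (M *v x))) \<le> (1 - p) / 2 * \<bar>x \<bullet> (M *v x)\<bar>"
            using p by (intro mult_left_mono) auto
          then show ?thesis by simp
        qed
        also have "\<dots> \<le> (1 - p) / 2 * (k * (k * k))" using q p by (intro mult_left_mono) auto
        finally show ?thesis .
      qed
      then show "gfun p b x \<le> B" unfolding bt gfun_eq B_def using i y by linarith
    qed
  qed
  obtain y M \<mu> where at: "a = (y, M, \<mu>)" by (cases a) auto
  have memA: "sets \<mu> = sets borel" "AE z in \<mu>. z \<in> S" "integrable \<mu> (wt eps)"
     "(\<integral>z. wt eps z \<partial>\<mu>) \<le> k" "norm y \<le> k" "mnorm2 M \<le> k"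
    using members[of y M \<mu>] a at by auto
  define A where "A = 2 * (Bk * k\<^sup>2 * k)"
  have A0: "A \<ge> 0" unfolding A_def using Bk0 k by simp
  define q where "q = e / (2 * (A + 1))"
  have q: "q > 0" unfolding q_def using e A0 by simp
  define c where "c = min 1 (q powr (1 / eps))"
  have c: "0 < c" "c \<le> 1" unfolding c_def using q by auto
  have cq: "c powr eps \<le> q"
  proof -
    have "c powr eps \<le> (q powr (1 / eps)) powr eps"
      unfolding c_def using eps q by (intro powr_mono2) auto
    also have "\<dots> = q" using eps q by (simp add: powr_powr)
    finally show ?thesis .
  qed
  have Acq: "A * c powr eps < e / 2"
  proof -
    have "A * c powr eps \<le> A * q" using cq A0 by (intro mult_left_mono) auto
    also have "A * q = e / 2 * (A / (A + 1))" unfolding q_def using A0 by (simp add: field_simps)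
    also have "\<dots> < e / 2" using e A0 by (simp add: field_simps)
    finally show ?thesis .
  qed
  define K where "K = Kc c"
  have K: "K > 0" unfolding K_def using Kc_pos[OF c(1)] .
  define X where "X = k + (1 - p) / 2 * k\<^sup>2 + K"
  have X0: "X \<ge> 0" unfolding X_def using k p K by simp
  define \<delta> where "\<delta> = e / (2 * (X + 1))"
  have \<delta>: "\<delta> > 0" unfolding \<delta>_def using e X0 by simp
  have X\<delta>: "X * \<delta> < e / 2"
  proof -
    have "X * \<delta> = e / 2 * (X / (X + 1))" unfolding \<delta>_def using X0 by (simp add: field_simps)
    also have "\<dots> < e / 2" using e X0 by (simp add: field_simps)
    finally show ?thesis .
  qed
  show "\<exists>\<delta>>0. \<forall>b\<in>\<Theta> t. dC eps a b < ereal \<delta> \<longrightarrow>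
           \<bar>Sup (gfun p b ` Oset \<Theta> t n) - Sup (gfun p a ` Oset \<Theta> t n)\<bar> < e"
  proof (intro exI[of _ \<delta>] conjI ballI impI)
    show "\<delta> > 0" by (rule \<delta>)
    fix b assume b: "b \<in> \<Theta> t" and dab: "dC eps a b < ereal \<delta>"
    obtain yh Mh \<nu> where bt: "b = (yh, Mh, \<nu>)" by (cases b) auto
    have memB: "sets \<nu> = sets borel" "AE z in \<nu>. z \<in> S" "integrable \<nu> (wt eps)"
       "(\<integral>z. wt eps z \<partial>\<nu>) \<le> k" "norm yh \<le> k" "mnorm2 Mh \<le> k"
      using members[of yh Mh \<nu>] b bt by auto
    have dy: "norm (y - yh) < \<delta>" and dM: "mnorm2 (M - Mh) < \<delta>" and dmu: "dL eps \<mu> \<nu> < ereal \<delta>"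
      using dab unfolding at bt dC_def by auto
    have pt: "\<bar>gfun p b x - gfun p a x\<bar> \<le> X * \<delta> + A * c powr eps" if x: "x \<in> Ox" for x
    proof -
      have nx: "norm x \<le> k" and xS: "\<forall>z\<in>S. x \<bullet> z \<ge> -1 + m" using Ofacts[OF x] by auto
      have ft: "(\<lambda>z. psi c x z / Kc c) \<in> testf eps" by (rule fpsi_testf[OF nx c])
      have Iab: "\<bar>(\<integral>z. psi c x z / Kc c * wt eps z \<partial>\<mu>) - (\<integral>z. psi c x z / Kc c * wt eps z \<partial>\<nu>)\<bar> < \<delta>"
        using dL_diff[OF ft dmu] by simp
      have dA: "\<bar>(\<integral>z. kf p (x \<bullet> z) \<partial>\<mu>) - K * (\<integral>z. psi c x z / Kc c * wt eps z \<partial>\<mu>)\<bar> \<le> Bk * k\<^sup>2 * c powr eps * k"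
        unfolding K_def by (rule measure_decomp(1)[OF nx xS c memA(1-4)])
      have dB: "\<bar>(\<integral>z. kf p (x \<bullet> z) \<partial>\<nu>) - K * (\<integral>z. psi c x z / Kc c * wt eps z \<partial>\<nu>)\<bar> \<le> Bk * k\<^sup>2 * c powr eps * k"
        unfolding K_def by (rule measure_decomp(1)[OF nx xS c memB(1-4)])
      have KI: "\<bar>K * (\<integral>z. psi c x z / Kc c * wt eps z \<partial>\<nu>) - K * (\<integral>z. psi c x z / Kc c * wt eps z \<partial>\<mu>)\<bar> \<le> K * \<delta>"
      proof -
        have "\<bar>K * (\<integral>z. psi c x z / Kc c * wt eps z \<partial>\<nu>) - K * (\<integral>z. psi c x z / Kc c * wt eps z \<partial>\<mu>)\<bar>
            = K * \<bar>(\<integral>z. psi c x z / Kc c * wt eps z \<partial>\<mu>) - (\<integral>z. psi c x z / Kc c * wt eps z \<partial>\<nu>)\<bar>"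
        proof -
          have gen: "\<bar>K * v - K * u\<bar> = K * \<bar>u - v\<bar>" for u v :: real
          proof -
            have "\<bar>K * v - K * u\<bar> = \<bar>K * (v - u)\<bar>" by (simp add: right_diff_distrib)
            also have "\<dots> = K * \<bar>u - v\<bar>" using K by (simp add: abs_mult abs_minus_commute)
            finally show ?thesis .
          qed
          show ?thesis by (rule gen)
        qed
        also have "\<dots> \<le> K * \<delta>" using Iab K by (intro mult_left_mono) auto
        finally show ?thesis .
      qed
      have int: "\<bar>(\<integral>z. kf p (x \<bullet> z) \<partial>\<nu>) - (\<integral>z. kf p (x \<bullet> z) \<partial>\<mu>)\<bar> \<le> K * \<delta> + A * c powr eps"
        using dA dB KI unfolding A_def by (simp add: algebra_simps) linarith?
      have ylin: "\<bar>x \<bullet> yh - x \<bullet> y\<bar> \<le> k * \<delta>"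
      proof -
        have "\<bar>x \<bullet> yh - x \<bullet> y\<bar> = \<bar>x \<bullet> (y - yh)\<bar>" by (simp add: inner_diff_right abs_minus_commute)
        also have "\<dots> \<le> norm x * norm (y - yh)" by (rule Cauchy_Schwarz_ineq2)
        also have "\<dots> \<le> k * \<delta>" using nx dy k by (intro mult_mono) auto
        finally show ?thesis .
      qed
      have qd: "\<bar>x \<bullet> (Mh *v x) - x \<bullet> (M *v x)\<bar> \<le> k\<^sup>2 * \<delta>"
      proof -
        have "\<bar>x \<bullet> (Mh *v x) - x \<bullet> (M *v x)\<bar> = \<bar>x \<bullet> ((M - Mh) *v x)\<bar>"
          by (simp add: matrix_vector_mult_diff_rdistrib inner_diff_right abs_minus_commute)
        also have "\<dots> \<le> norm x * (mnorm2 (M - Mh) * norm x)" by (rule quad_bound)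
        also have "\<dots> \<le> k * (\<delta> * k)"
          using nx dM k mnorm2_nonneg[of "M - Mh"] \<delta> by (intro mult_mono) auto
        finally show ?thesis by (simp add: power2_eq_square mult.commute mult.left_commute)
      qed
      have qd2: "\<bar>(1 - p) / 2 * (x \<bullet> (Mh *v x)) - (1 - p) / 2 * (x \<bullet> (M *v x))\<bar> \<le> (1 - p) / 2 * k\<^sup>2 * \<delta>"
      proof -
        have "\<bar>(1 - p) / 2 * (x \<bullet> (Mh *v x)) - (1 - p) / 2 * (x \<bullet> (M *v x))\<bar>
              = (1 - p) / 2 * \<bar>x \<bullet> (Mh *v x) - x \<bullet> (M *v x)\<bar>"
        proof -
          have gen: "\<bar>(1 - p) / 2 * u - (1 - p) / 2 * v\<bar> = (1 - p) / 2 * \<bar>u - v\<bar>" for u v :: real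
          proof -
            have "\<bar>(1 - p) / 2 * u - (1 - p) / 2 * v\<bar> = \<bar>(1 - p) / 2 * (u - v)\<bar>" by (simp add: right_diff_distrib)
            also have "\<dots> = (1 - p) / 2 * \<bar>u - v\<bar>" using p by (simp add: abs_mult)
            finally show ?thesis .
          qed
          show ?thesis by (rule gen)
        qed
        also have "\<dots> \<le> (1 - p) / 2 * (k\<^sup>2 * \<delta>)" using qd p by (intro mult_left_mono) auto
        finally show ?thesis by (simp add: mult.assoc)
      qed
      have "\<bar>gfun p b x - gfun p a x\<bar> \<le> k * \<delta> + (1 - p) / 2 * k\<^sup>2 * \<delta> + (K * \<delta> + A * c powr eps)"
        unfolding at bt gfun_eq using ylin qd2 int by linarith
      also have "\<dots> = X * \<delta> + A * c powr eps" unfolding X_def by (simp add: algebra_simps)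
      finally show ?thesis .
    qed
    have "\<bar>Sup (gfun p b ` Ox) - Sup (gfun p a ` Ox)\<bar> \<le> X * \<delta> + A * c powr eps"
      by (rule Sup_diff[OF _ bdd[OF b] bdd[OF a] pt]) (use O0 in auto)
    also have "\<dots> < e" using X\<delta> Acq by linarith
    finally show "\<bar>Sup (gfun p b ` Oset \<Theta> t n) - Sup (gfun p a ` Oset \<Theta> t n)\<bar> < e"
      unfolding Ox_def .
  qed
qed

end
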